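(* Assume $f^*$ is additive. Suppose $\pi_g,\pi_p>0$, and suppose the proposal contains a trivial move (returning the current state) that is selected with some probability $\pi_0>0$. Suppose $p_{\mathrm{TSE}}$ has full support, and let $m,\sigma^2,\lambda$ be arbitrary. If $r\ge\mathrm{diam}(\Omega_{\mathrm{TSE},m})$, then for any tolerance $\varepsilon>0$, the lazification of the Markov chain induced by BART+ with $r$-step proposals and temperature $T=1$ has $\varepsilon$-mixing time satisfying $$t_{\mathrm{mix}}(\varepsilon)=O_{\mathbb P}(1).$$
   Context: Data: $\mathcal X=\{1,\dots,B\}^d$; $\nu$ a full-support probability measure on $\mathcal X$; $\epsilon$ a (centered) sub-Gaussian random variable; training data are $n$ i.i.d. pairs $(\mathbf x_i,y_i)$, $\mathbf x_i\sim\nu$, $y_i=f^*(\mathbf x_i)+\epsilon_i$, noise independent of covariates; $\mathbb P_n$ is probability over the data. $f^*$ is additive if $f^*(\mathbf x)=f_1(x_1)+\cdots+f_{m'}(x_{m'})$ for some $2\le m'\le d$ and univariate $f_i$. Trees: a tree structure is a finite rooted binary tree with axis-aligned splitting rules at internal nodes (children $\{x_v\le t\}$, $\{x_v>t\}$ of the parent's cell, both nonempty). $\Omega_{\mathrm{TSE},m}$ is the finite set of TSEs $\mathfrak E=(\mathfrak T_1,\dots,\mathfrak T_m)$. Bayesian model: given $\mathfrak E$ with $b$ leaves, $\boldsymbol\Psi$ is the $n\times b$ leaf-indicator matrix over training points, $\boldsymbol\mu\sim N(0,(\sigma^2/\lambda)\mathbf I_b)$, $\mathbf y=\boldsymbol\Psi\boldsymbol\mu+\mathbf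 e$, $\mathbf e\sim N(0,\sigma^2\mathbf I_n)$; prior $p=p_{\mathrm{TSE}}$; marginal likelihood $p(\mathbf y\mid\mathfrak E)$; posterior $p(\mathfrak E\mid\mathbf y)\propto p(\mathbf y\mid\mathfrak E)p(\mathfrak E)$. Proposal: on tree structures, with probabilities $\pi_g,\pi_p,\pi_c,\pi_s$ (and here also a trivial move with probability $\pi_0$) propose grow (split a leaf), prune (collapse two sibling leaves), change (change an internal node's rule), or swap (swap rules of a parent–child pair of internal nodes, or if both children share a rule, swap parent's rule with both children's), choices uniform, empty leaves disallowed. On ensembles, $Q(\mathfrak E,\mathfrak E')$ is the probability of proposing $\mathfrak E'$ from $\mathfrak E$ by choosing a tree index uniformly at random and applying the tree proposal to that tree. $Q^r(\mathfrak E,\mathfrak E')=\sum_{\mathfrak E_1,\dots,\mathfrak E_{r-1}}Q(\mathfrak E,\mathfrak E_1)\prod_{i=2}^{r-1}Q(\mathfrak E_{i-1},\mathfrak E_i)Q(\mathfrak E_{r-1},\mathfrak E')$ is the $r$-step proposal. $\mathrm{diam}(\Omega_{\mathrm{TSE},m})$ is the diameter of the graph on $\Omega_{\mathrm{TSE},m}$ with an edge between $\mathfrak E,\mathfrak E'$ when $Q(\mathfrak E,\mathfrak E')>0$. BART+ with $r$ steps and temperature $T$: Markov chain on $\Omega_{\mathrm{TSE},m}$ with transition matrix $P$ that proposes $\mathfrak E'\sim Q^r(\mathfrak E,\cdot)$ and accepts with probability $\min\big\{\frac{Q^r(\mathfrak E',\mathfrak E)p(\mathfrak E')}{Q^r(\mathfrak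 E,\mathfrak E')p(\mathfrak E)}\big(\frac{p(\mathbf y\mid\mathfrak E')}{p(\mathbf y\mid\mathfrak E)}\big)^{1/T},1\big\}$. Its lazification has transition matrix $\tilde P=(P+I)/2$; with stationary distribution $\pi$, $t_{\mathrm{mix}}(\varepsilon)=\min\{t\ge0:\max_x\|\tilde P^t(x,\cdot)-\pi\|_{\mathrm{TV}}\le\varepsilon\}$. $a_n=O_{\mathbb P}(b_n)$: for every $0<\delta<1$ there are $N,C>0$ with $\sup_{n>N}\mathbb P_n\{|a_n/b_n|>C\}<\delta$. *)

theory Defs
  imports "HOL-Probability.Probability" "Jordan_Normal_Form.Gauss_Jordan_Elimination"
    "Jordan_Normal_Form.Determinant"
begin

text \<open>A point of X = {1..B}^d is a list of length d with entries in {1..B};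
  coordinate v (0-based, v < d) is x ! v.\<close>

definition Xset :: "nat \<Rightarrow> nat \<Rightarrow> nat list set" where
  "Xset B d = {x. length x = d \<and> (\<forall>i<d. x ! i \<in> {1..B})}"

text \<open>A splitting rule (v,t) sends the left child to {x_v <= t}, the right to {x_v > t}.\<close>
datatype tree = Leaf | Node "nat \<times> nat" tree tree

definition le_set :: "nat \<times> nat \<Rightarrow> nat list set" where
  "le_set \<rho> = {x. x ! fst \<rho> \<le> snd \<rho>}"

definition gt_set :: "nat \<times> nat \<Rightarrow> nat list set" where
  "gt_set \<rho> = {x. x ! fst \<rho> > snd \<rho>}"

fun valid_in :: "nat \<Rightarrow> nat list set \<Rightarrow> tree \<Rightarrow> bool" where
  "valid_in d C Leaf = True"
| "valid_in d C (Node \<rho> l r) =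
     (fst \<rho> < d \<and> C \<inter> le_set \<rho> \<noteq> {} \<and> C \<inter> gt_set \<rho> \<noteq> {}
      \<and> valid_in d (C \<inter> le_set \<rho>) l \<and> valid_in d (C \<inter> gt_set \<rho>) r)"

definition valid_tree :: "nat \<Rightarrow> nat \<Rightarrow> tree \<Rightarrow> bool" where
  "valid_tree B d T = valid_in d (Xset B d) T"

definition TSE_space :: "nat \<Rightarrow> nat \<Rightarrow> nat \<Rightarrow> tree list set" where
  "TSE_space B d m = {E. length E = m \<and> (\<forall>T\<in>set E. valid_tree B d T)}"

fun leaf_cells :: "nat list set \<Rightarrow> tree \<Rightarrow> nat list set list" where
  "leaf_cells C Leaf = [C]"
| "leaf_cells C (Node \<rho> l r) = leaf_cells (C \<inter> le_set \<rho>) l @ leaf_cells (C \<inter> gt_set \<rho>) r"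

definition ens_cells :: "nat \<Rightarrow> nat \<Rightarrow> tree list \<Rightarrow> nat list set list" where
  "ens_cells B d E = concat (map (leaf_cells (Xset B d)) E)"

section \<open>Positions in a tree (paths; False = left child, True = right child)\<close>

fun subtree :: "tree \<Rightarrow> bool list \<Rightarrow> tree" where
  "subtree T [] = T"
| "subtree Leaf (b # p) = Leaf"
| "subtree (Node \<rho> l r) (b # p) = subtree (if b then r else l) p"

fun replace :: "tree \<Rightarrow> bool list \<Rightarrow> tree \<Rightarrow> tree" where
  "replace T [] S = S"
| "replace Leaf (b # p) S = Leaf"
| "replace (Node \<rho> l r) (b # p) S =
     (if b then Node \<rho> l (replace r p S) else Node \<rho> (replace l p S) r)"

fun paths :: "tree \<Rightarrow> bool list set" where
  "paths Leaf = {[]}"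
| "paths (Node \<rho> l r) = insert [] ((\<lambda>p. False # p) ` paths l \<union> (\<lambda>p. True # p) ` paths r)"

definition leaf_paths :: "tree \<Rightarrow> bool list set" where
  "leaf_paths T = {p \<in> paths T. subtree T p = Leaf}"

definition int_paths :: "tree \<Rightarrow> bool list set" where
  "int_paths T = {p \<in> paths T. subtree T p \<noteq> Leaf}"

fun rule_of :: "tree \<Rightarrow> nat \<times> nat" where
  "rule_of Leaf = (0, 0)"
| "rule_of (Node \<rho> l r) = \<rho>"

fun set_rule :: "tree \<Rightarrow> nat \<times> nat \<Rightarrow> tree" where
  "set_rule Leaf \<rho> = Leaf"
| "set_rule (Node \<sigma> l r) \<rho> = Node \<rho> l r"

definition set_rule_at :: "tree \<Rightarrow> bool list \<Rightarrow> nat \<times> nat \<Rightarrow> tree" where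
  "set_rule_at T p \<rho> = replace T p (set_rule (subtree T p) \<rho>)"

text \<open>Candidate rules (a finite superset of all rules that can give two nonempty children).\<close>
definition rules :: "nat \<Rightarrow> nat \<Rightarrow> (nat \<times> nat) set" where
  "rules B d = {..<d} \<times> {..<B}"

definition grow_rules :: "nat \<Rightarrow> nat \<Rightarrow> tree \<Rightarrow> bool list \<Rightarrow> (nat \<times> nat) set" where
  "grow_rules B d T p = {\<rho> \<in> rules B d. valid_tree B d (replace T p (Node \<rho> Leaf Leaf))}"

definition growable :: "nat \<Rightarrow> nat \<Rightarrow> tree \<Rightarrow> bool list set" where
  "growable B d T = {p \<in> leaf_paths T. grow_rules B d T p \<noteq> {}}"

definition grow_prop :: "nat \<Rightarrow> nat \<Rightarrow> tree \<Rightarrow> tree pmf" where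
  "grow_prop B d T =
     (if growable B d T = {} then return_pmf T
      else bind_pmf (pmf_of_set (growable B d T))
        (\<lambda>p. map_pmf (\<lambda>\<rho>. replace T p (Node \<rho> Leaf Leaf)) (pmf_of_set (grow_rules B d T p))))"

definition prunable :: "tree \<Rightarrow> bool list set" where
  "prunable T = {p \<in> int_paths T. subtree T (p @ [False]) = Leaf \<and> subtree T (p @ [True]) = Leaf}"

definition prune_prop :: "tree \<Rightarrow> tree pmf" where
  "prune_prop T =
     (if prunable T = {} then return_pmf T
      else map_pmf (\<lambda>p. replace T p Leaf) (pmf_of_set (prunable T)))"

definition change_rules :: "nat \<Rightarrow> nat \<Rightarrow> tree \<Rightarrow> bool list \<Rightarrow> (nat \<times> nat) set" where
  "change_rules B d T p =
     {\<rho> \<in> rules B d. \<rho> \<noteq> rule_of (subtree T p) \<and> valid_tree B d (set_rule_at T p \<rho>)}"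

definition changeable :: "nat \<Rightarrow> nat \<Rightarrow> tree \<Rightarrow> bool list set" where
  "changeable B d T = {p \<in> int_paths T. change_rules B d T p \<noteq> {}}"

definition change_prop :: "nat \<Rightarrow> nat \<Rightarrow> tree \<Rightarrow> tree pmf" where
  "change_prop B d T =
     (if changeable B d T = {} then return_pmf T
      else bind_pmf (pmf_of_set (changeable B d T))
        (\<lambda>p. map_pmf (\<lambda>\<rho>. set_rule_at T p \<rho>) (pmf_of_set (change_rules B d T p))))"

definition swap_result :: "tree \<Rightarrow> bool list \<Rightarrow> bool \<Rightarrow> tree" where
  "swap_result T p b =
     (let \<rho>p = rule_of (subtree T p); l = subtree T (p @ [False]); r = subtree T (p @ [True]) in
      if l \<noteq> Leaf \<and> r \<noteq> Leaf \<and> rule_of l = rule_of r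
      then set_rule_at (set_rule_at (set_rule_at T p (rule_of l)) (p @ [False]) \<rho>p) (p @ [True]) \<rho>p
      else set_rule_at (set_rule_at T p (rule_of (subtree T (p @ [b])))) (p @ [b]) \<rho>p)"

definition swap_pairs :: "nat \<Rightarrow> nat \<Rightarrow> tree \<Rightarrow> (bool list \<times> bool) set" where
  "swap_pairs B d T = {(p, b). p \<in> int_paths T \<and> p @ [b] \<in> int_paths T
                               \<and> valid_tree B d (swap_result T p b)}"

definition swap_prop :: "nat \<Rightarrow> nat \<Rightarrow> tree \<Rightarrow> tree pmf" where
  "swap_prop B d T =
     (if swap_pairs B d T = {} then return_pmf T
      else map_pmf (\<lambda>(p, b). swap_result T p b) (pmf_of_set (swap_pairs B d T)))"

text \<open>Move type: 0 trivial, 1 grow, 2 prune, 3 change, 4 swap.\<close>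
definition move_pmf :: "real \<Rightarrow> real \<Rightarrow> real \<Rightarrow> real \<Rightarrow> real \<Rightarrow> nat pmf" where
  "move_pmf p0 pg pp pc ps = embed_pmf (\<lambda>k. if k = 0 then p0 else if k = 1 then pg
      else if k = 2 then pp else if k = 3 then pc else if k = 4 then ps else 0)"

definition tree_prop :: "nat \<Rightarrow> nat \<Rightarrow> real \<Rightarrow> real \<Rightarrow> real \<Rightarrow> real \<Rightarrow> real \<Rightarrow> tree \<Rightarrow> tree pmf" where
  "tree_prop B d p0 pg pp pc ps T = bind_pmf (move_pmf p0 pg pp pc ps)
     (\<lambda>k. if k = 1 then grow_prop B d T else if k = 2 then prune_prop T
          else if k = 3 then change_prop B d T else if k = 4 then swap_prop B d T
          else return_pmf T)"

definition ens_prop :: "nat \<Rightarrow> nat \<Rightarrow> real \<Rightarrow> real \<Rightarrow> real \<Rightarrow> real \<Rightarrow> real \<Rightarrow> tree list \<Rightarrow> tree list pmf" where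
  "ens_prop B d p0 pg pp pc ps E = bind_pmf (pmf_of_set {..<length E})
     (\<lambda>i. map_pmf (\<lambda>T. E[i := T]) (tree_prop B d p0 pg pp pc ps (E ! i)))"

fun ens_prop_pow :: "nat \<Rightarrow> nat \<Rightarrow> real \<Rightarrow> real \<Rightarrow> real \<Rightarrow> real \<Rightarrow> real \<Rightarrow> nat \<Rightarrow> tree list \<Rightarrow> tree list pmf" where
  "ens_prop_pow B d p0 pg pp pc ps 0 E = return_pmf E"
| "ens_prop_pow B d p0 pg pp pc ps (Suc r) E =
     bind_pmf (ens_prop_pow B d p0 pg pp pc ps r E) (ens_prop B d p0 pg pp pc ps)"

definition prop_edges :: "nat \<Rightarrow> nat \<Rightarrow> real \<Rightarrow> real \<Rightarrow> real \<Rightarrow> real \<Rightarrow> real \<Rightarrow> nat \<Rightarrow> (tree list \<times> tree list) set" where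
  "prop_edges B d p0 pg pp pc ps m =
     {(E, E'). E \<in> TSE_space B d m \<and> E' \<in> TSE_space B d m \<and>
        (pmf (ens_prop B d p0 pg pp pc ps E) E' > 0 \<or> pmf (ens_prop B d p0 pg pp pc ps E') E > 0)}"

text \<open>Graph distance (infinite if not connected) and diameter, valued in enat.\<close>
definition graph_dist :: "('a \<times> 'a) set \<Rightarrow> 'a \<Rightarrow> 'a \<Rightarrow> enat" where
  "graph_dist R x y = (INF k \<in> {k. (x, y) \<in> R ^^ k}. enat k)"

definition tse_diam :: "nat \<Rightarrow> nat \<Rightarrow> real \<Rightarrow> real \<Rightarrow> real \<Rightarrow> real \<Rightarrow> real \<Rightarrow> nat \<Rightarrow> enat" where
  "tse_diam B d p0 pg pp pc ps m =
     (SUP x \<in> TSE_space B d m \<times> TSE_space B d m.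
        graph_dist (prop_edges B d p0 pg pp pc ps m) (fst x) (snd x))"

definition design_mat :: "nat \<Rightarrow> (nat \<Rightarrow> nat list) \<Rightarrow> nat list set list \<Rightarrow> real mat" where
  "design_mat n xs cells = mat n (length cells) (\<lambda>(i, j). if xs i \<in> cells ! j then 1 else 0)"

text \<open>y ~ N(0, sigma^2 (I_n + lambda^{-1} Psi Psi^T)), the marginal of
  y = Psi mu + e, mu ~ N(0, sigma^2/lambda I_b), e ~ N(0, sigma^2 I_n).\<close>
definition marg_lik :: "real \<Rightarrow> real \<Rightarrow> nat \<Rightarrow> (nat \<Rightarrow> nat list) \<Rightarrow> (nat \<Rightarrow> real) \<Rightarrow> nat list set list \<Rightarrow> real" where
  "marg_lik s2 lam n xs ys cells =
     (let Psi = design_mat n xs cells;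
          Sig = s2 \<cdot>\<^sub>m (1\<^sub>m n + (1 / lam) \<cdot>\<^sub>m (Psi * transpose_mat Psi));
          yv = vec n ys
      in (2 * pi) powr (- (real n / 2)) * Determinant.det Sig powr (- 1 / 2)
         * exp (- (1 / 2) * scalar_prod yv (the (mat_inverse Sig) *\<^sub>v yv)))"

definition lazify :: "('a \<Rightarrow> 'a pmf) \<Rightarrow> 'a \<Rightarrow> 'a pmf" where
  "lazify K x = bind_pmf (bernoulli_pmf (1 / 2)) (\<lambda>b. if b then K x else return_pmf x)"

definition kernel_pow :: "('a \<Rightarrow> 'a pmf) \<Rightarrow> nat \<Rightarrow> 'a \<Rightarrow> 'a pmf" where
  "kernel_pow K t x = ((\<lambda>\<mu>. bind_pmf \<mu> K) ^^ t) (return_pmf x)"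

definition tv_dist :: "'a pmf \<Rightarrow> 'a pmf \<Rightarrow> real" where
  "tv_dist \<mu> \<nu> = (SUP A. \<bar>measure_pmf.prob \<mu> A - measure_pmf.prob \<nu> A\<bar>)"

definition mix_time :: "('a \<Rightarrow> 'a pmf) \<Rightarrow> 'a set \<Rightarrow> 'a pmf \<Rightarrow> real \<Rightarrow> enat" where
  "mix_time K S \<pi> eps = (INF t \<in> {t. \<forall>x\<in>S. tv_dist (kernel_pow K t x) \<pi> \<le> eps}. enat t)"

text \<open>Training data D: D i = (x_i, y_i) for i < n.\<close>
definition data_lik :: "nat \<Rightarrow> nat \<Rightarrow> real \<Rightarrow> real \<Rightarrow> nat \<Rightarrow> (nat \<Rightarrow> nat list \<times> real) \<Rightarrow> tree list \<Rightarrow> real" where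
  "data_lik B d s2 lam n D E = marg_lik s2 lam n (\<lambda>i. fst (D i)) (\<lambda>i. snd (D i)) (ens_cells B d E)"

definition bart_kernel :: "nat \<Rightarrow> nat \<Rightarrow> real \<Rightarrow> real \<Rightarrow> real \<Rightarrow> real \<Rightarrow> real \<Rightarrow> nat \<Rightarrow> real
     \<Rightarrow> tree list pmf \<Rightarrow> real \<Rightarrow> real \<Rightarrow> nat \<Rightarrow> (nat \<Rightarrow> nat list \<times> real) \<Rightarrow> tree list \<Rightarrow> tree list pmf" where
  "bart_kernel B d p0 pg pp pc ps r Temp prior s2 lam n D E =
     (let Q = ens_prop_pow B d p0 pg pp pc ps r; L = data_lik B d s2 lam n D in
      bind_pmf (Q E) (\<lambda>E'. map_pmf (\<lambda>acc. if acc then E' else E)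
        (bernoulli_pmf (min ((pmf (Q E') E * pmf prior E') / (pmf (Q E) E' * pmf prior E)
                              * (L E' / L E) powr (1 / Temp)) 1))))"

definition tempered_post :: "nat \<Rightarrow> nat \<Rightarrow> real \<Rightarrow> tree list pmf \<Rightarrow> real \<Rightarrow> real \<Rightarrow> nat
     \<Rightarrow> (nat \<Rightarrow> nat list \<times> real) \<Rightarrow> tree list pmf" where
  "tempered_post B d Temp prior s2 lam n D =
     embed_pmf (\<lambda>E. pmf prior E * data_lik B d s2 lam n D E powr (1 / Temp)
        / (\<Sum>E'\<in>set_pmf prior. pmf prior E' * data_lik B d s2 lam n D E' powr (1 / Temp)))"

definition bart_mix_time :: "nat \<Rightarrow> nat \<Rightarrow> real \<Rightarrow> real \<Rightarrow> real \<Rightarrow> real \<Rightarrow> real \<Rightarrow> nat \<Rightarrow> nat \<Rightarrow> real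
     \<Rightarrow> tree list pmf \<Rightarrow> real \<Rightarrow> real \<Rightarrow> real \<Rightarrow> nat \<Rightarrow> (nat \<Rightarrow> nat list \<times> real) \<Rightarrow> enat" where
  "bart_mix_time B d p0 pg pp pc ps m r Temp prior s2 lam eps n D =
     mix_time (lazify (bart_kernel B d p0 pg pp pc ps r Temp prior s2 lam n D))
       (TSE_space B d m) (tempered_post B d Temp prior s2 lam n D) eps"

definition additive :: "nat \<Rightarrow> nat \<Rightarrow> (nat list \<Rightarrow> real) \<Rightarrow> bool" where
  "additive B d f \<longleftrightarrow> (\<exists>m' (fs :: nat \<Rightarrow> nat \<Rightarrow> real). 2 \<le> m' \<and> m' \<le> d \<and>
      (\<forall>x\<in>Xset B d. f x = (\<Sum>i<m'. fs i (x ! i))))"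

definition centered_subgaussian :: "real measure \<Rightarrow> bool" where
  "centered_subgaussian N \<longleftrightarrow> prob_space N \<and> sets N = sets borel \<and> integrable N (\<lambda>e. e)
     \<and> (\<integral>e. e \<partial>N) = 0 \<and>
     (\<exists>s. \<forall>t::real. integrable N (\<lambda>e. exp (t * e)) \<and> (\<integral>e. exp (t * e) \<partial>N) \<le> exp (s\<^sup>2 * t\<^sup>2 / 2))"

definition sample_dist :: "nat list pmf \<Rightarrow> real measure \<Rightarrow> (nat list \<Rightarrow> real) \<Rightarrow> (nat list \<times> real) measure" where
  "sample_dist \<nu> N f = distr (measure_pmf \<nu> \<Otimes>\<^sub>M N) (count_space UNIV \<Otimes>\<^sub>M borel) (\<lambda>(x, e). (x, f x + e))"

definition data_measure :: "nat \<Rightarrow> nat list pmf \<Rightarrow> real measure \<Rightarrow> (nat list \<Rightarrow> real)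
     \<Rightarrow> (nat \<Rightarrow> nat list \<times> real) measure" where
  "data_measure n \<nu> N f = PiM {..<n} (\<lambda>_. sample_dist \<nu> N f)"

end

theory Submission
  imports Defs
begin

lemma smult_mat_mult_vec_aux:
  fixes A :: "real mat"
  assumes "A \<in> carrier_mat nr nc" "v \<in> carrier_vec nc"
  shows "(k \<cdot>\<^sub>m A) *\<^sub>v v = k \<cdot>\<^sub>v (A *\<^sub>v v)"
  using assms by (intro eq_vecI) (auto simp: scalar_prod_def sum_distrib_left ac_simps)

lemma det_Sig_nz:
  fixes Psi :: "real mat" and s2 c :: real
  assumes P: "Psi \<in> carrier_mat n k" and s2: "s2 > 0" and c: "c > 0"
  shows "Determinant.det (s2 \<cdot>\<^sub>m (1\<^sub>m n + c \<cdot>\<^sub>m (Psi * transpose_mat Psi))) \<noteq> 0"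
proof
  let ?M = "1\<^sub>m n + c \<cdot>\<^sub>m (Psi * transpose_mat Psi)"
  have M: "?M \<in> carrier_mat n n" using P by auto
  assume "Determinant.det (s2 \<cdot>\<^sub>m ?M) = 0"
  hence "Determinant.det ?M = 0" using s2 by simp
  then obtain v where v: "v \<in> carrier_vec n" "v \<noteq> 0\<^sub>v n" "?M *\<^sub>v v = 0\<^sub>v n"
    using det_0_iff_vec_prod_zero[OF M] by blast
  have w: "transpose_mat Psi *\<^sub>v v \<in> carrier_vec k" using P v by auto
  have "?M *\<^sub>v v = v + c \<cdot>\<^sub>v (Psi *\<^sub>v (transpose_mat Psi *\<^sub>v v))"
  proof -
    have "?M *\<^sub>v v = 1\<^sub>m n *\<^sub>v v + (c \<cdot>\<^sub>m (Psi * transpose_mat Psi)) *\<^sub>v v"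
      using P v(1) by (intro add_mult_distrib_mat_vec[of _ n n]) auto
    also have "(c \<cdot>\<^sub>m (Psi * transpose_mat Psi)) *\<^sub>v v = c \<cdot>\<^sub>v ((Psi * transpose_mat Psi) *\<^sub>v v)"
      using P v(1) by (intro smult_mat_mult_vec_aux[of _ n n]) auto
    finally show ?thesis using P v(1) by simp
  qed
  hence "v \<bullet> (?M *\<^sub>v v) = v \<bullet> v + c * (v \<bullet> (Psi *\<^sub>v (transpose_mat Psi *\<^sub>v v)))"
    using P v(1) by (simp add: scalar_prod_add_distrib[of _ n])
  also have "v \<bullet> (Psi *\<^sub>v (transpose_mat Psi *\<^sub>v v)) = (transpose_mat Psi *\<^sub>v v) \<bullet> (transpose_mat Psi *\<^sub>v v)"
    using transpose_vec_mult_scalar[OF P w v(1)] by simp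
  finally have eq: "v \<bullet> (?M *\<^sub>v v) = v \<bullet> v + c * ((transpose_mat Psi *\<^sub>v v) \<bullet> (transpose_mat Psi *\<^sub>v v))" .
  have g1: "v \<bullet> v > 0" using conjugate_square_eq_0_vec[OF v(1)] conjugate_square_ge_0_vec[of v] v(2)
    by (auto simp: order_le_less)
  have g2: "(transpose_mat Psi *\<^sub>v v) \<bullet> (transpose_mat Psi *\<^sub>v v) \<ge> 0"
    using conjugate_square_ge_0_vec[of "transpose_mat Psi *\<^sub>v v"] by simp
  have "v \<bullet> (?M *\<^sub>v v) = 0" using v by simp
  with eq g1 g2 c show False by (smt (verit) mult_nonneg_nonneg)
qed

lemma subtree_Leaf[simp]: "subtree Leaf q = Leaf" by (cases q) auto

lemma subtree_append: "subtree T (p @ q) = subtree (subtree T p) q"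
  by (induction T p rule: subtree.induct) auto

lemma replace_Leaf[simp]: "replace Leaf q S = (if q = [] then S else Leaf)"
  by (cases q) auto

lemma replace_append: "replace T (p @ q) S = replace T p (replace (subtree T p) q S)"
  by (induction T p rule: subtree.induct) auto

lemma replace_replace[simp]: "replace (replace T p X) p Y = replace T p Y"
  by (induction T p rule: subtree.induct) auto

lemma replace_subtree[simp]: "replace T p (subtree T p) = T"
  by (induction T p rule: subtree.induct) auto

lemma subtree_replace: "p \<in> paths T \<Longrightarrow> subtree (replace T p X) p = X"
  by (induction T p rule: subtree.induct) auto

lemma nil_paths[simp]: "[] \<in> paths T" by (cases T) auto

lemma paths_replace: "p \<in> paths T \<Longrightarrow> q \<in> paths X \<Longrightarrow> p @ q \<in> paths (replace T p X)"
  by (induction T p rule: subtree.induct) auto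

lemma paths_replace_self: "p \<in> paths T \<Longrightarrow> p \<in> paths (replace T p X)"
  using paths_replace[of p T "[]" X] by simp

lemma finite_paths: "finite (paths T)"
  by (induction T) auto

lemma valid_subtree: "valid_in d C T \<Longrightarrow> p \<in> paths T \<Longrightarrow> \<exists>C'\<subseteq>C. valid_in d C' (subtree T p)"
proof (induction T arbitrary: C p)
  case Leaf then show ?case by auto
next
  case (Node \<rho> l r)
  show ?case
  proof (cases p)
    case Nil then show ?thesis using Node.prems by auto
  next
    case (Cons b q)
    show ?thesis
    proof (cases b)
      case True
      then have "q \<in> paths r" using Node.prems Cons by auto
      then obtain C' where "C' \<subseteq> C \<inter> gt_set \<rho>" "valid_in d C' (subtree r q)"
        using Node.IH(2)[of "C \<inter> gt_set \<rho>" q] Node.prems by auto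
      then show ?thesis using Cons True by auto
    next
      case False
      then have "q \<in> paths l" using Node.prems Cons by auto
      then obtain C' where "C' \<subseteq> C \<inter> le_set \<rho>" "valid_in d C' (subtree l q)"
        using Node.IH(1)[of "C \<inter> le_set \<rho>" q] Node.prems by auto
      then show ?thesis using Cons False by auto
    qed
  qed
qed

lemma child_path: "p \<in> paths T \<Longrightarrow> subtree T p = Node \<rho> l r \<Longrightarrow> p @ [b] \<in> paths T"
proof -
  assume a: "p \<in> paths T" "subtree T p = Node \<rho> l r"
  have "[b] \<in> paths (subtree T p)" using a(2) by (cases b) auto
  from paths_replace[OF a(1) this] show ?thesis by simp
qed

lemma valid_node_rule:
  assumes "valid_in d C (Node \<rho> l r)" "C \<subseteq> Xset B d"
  shows "\<rho> \<in> rules B d"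
proof -
  obtain x where x: "x \<in> C" "x ! fst \<rho> > snd \<rho>" using assms(1) by (auto simp: gt_set_def)
  have "fst \<rho> < d" using assms(1) by auto
  then have "x ! fst \<rho> \<le> B" using x assms(2) by (auto simp: Xset_def)
  then show ?thesis using x \<open>fst \<rho> < d\<close> by (auto simp: rules_def mem_Times_iff)
qed

lemma valid_tree_rule_at:
  assumes "valid_tree B d T" "p \<in> paths T" "subtree T p = Node \<rho> l r"
  shows "\<rho> \<in> rules B d"
proof -
  obtain C' where "C' \<subseteq> Xset B d" "valid_in d C' (Node \<rho> l r)"
    using valid_subtree[OF assms(1)[unfolded valid_tree_def] assms(2)] assms(3) by auto
  then show ?thesis using valid_node_rule by blast
qed

lemma valid_child_rule_neq:
  assumes "valid_in d C (Node \<rho> l r)"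
  shows "l = Node \<sigma> a b \<Longrightarrow> \<sigma> \<noteq> \<rho>" and "r = Node \<sigma> a b \<Longrightarrow> \<sigma> \<noteq> \<rho>"
  using assms by (auto simp: le_set_def gt_set_def)

lemma grow_rev:
  assumes "p \<in> growable B d T" "\<rho> \<in> grow_rules B d T p"
  shows "T \<in> set_pmf (prune_prop (replace T p (Node \<rho> Leaf Leaf)))"
proof -
  let ?T' = "replace T p (Node \<rho> Leaf Leaf)"
  have p: "p \<in> paths T" "subtree T p = Leaf" using assms(1) by (auto simp: growable_def leaf_paths_def)
  have sub: "subtree ?T' p = Node \<rho> Leaf Leaf" using subtree_replace[OF p(1)] .
  have pp: "p \<in> prunable ?T'"
    using sub paths_replace_self[OF p(1)]
    by (auto simp: prunable_def int_paths_def subtree_append)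
  have fin: "finite (prunable ?T')"
    using finite_paths[of ?T'] by (rule rev_finite_subset) (auto simp: prunable_def int_paths_def)
  have "replace ?T' p Leaf = T" using p(2) replace_subtree[of T p] by simp
  then have "T \<in> (\<lambda>x. replace ?T' x Leaf) ` prunable ?T'" using pp by (metis image_eqI)
  then show ?thesis using pp fin unfolding prune_prop_def by (auto simp: set_pmf_of_set)
qed

lemma set_pmf_of_set_mem: "finite A \<Longrightarrow> x \<in> A \<Longrightarrow> set_pmf (pmf_of_set A) = A"
  by (rule set_pmf_of_set) auto

lemma finite_rules: "finite (rules B d)" by (simp add: rules_def)

lemma prune_rev:
  assumes V: "valid_tree B d T" and pp: "p \<in> prunable T"
  shows "T \<in> set_pmf (grow_prop B d (replace T p Leaf))"
proof -
  let ?T' = "replace T p Leaf"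
  have p: "p \<in> paths T" "subtree T p \<noteq> Leaf" "subtree T (p @ [False]) = Leaf" "subtree T (p @ [True]) = Leaf"
    using pp by (auto simp: prunable_def int_paths_def)
  obtain \<rho> l r where N: "subtree T p = Node \<rho> l r" using p(2) by (cases "subtree T p") auto
  have lr: "l = Leaf" "r = Leaf" using p(3,4) N by (auto simp: subtree_append)
  have rho: "\<rho> \<in> rules B d" using valid_tree_rule_at[OF V p(1) N] .
  have eq: "replace ?T' p (Node \<rho> Leaf Leaf) = T"
    using replace_subtree[of T p] N lr by simp
  have gr: "\<rho> \<in> grow_rules B d ?T' p" using rho eq V by (simp add: grow_rules_def)
  have lp: "p \<in> leaf_paths ?T'" using paths_replace_self[OF p(1)] subtree_replace[OF p(1)]
    by (auto simp: leaf_paths_def)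
  have g: "p \<in> growable B d ?T'" using lp gr by (auto simp: growable_def)
  have fing: "finite (growable B d ?T')"
    using finite_paths[of ?T'] by (rule rev_finite_subset) (auto simp: growable_def leaf_paths_def)
  have finr: "finite (grow_rules B d ?T' p)"
    using finite_rules by (rule rev_finite_subset) (auto simp: grow_rules_def)
  have "T \<in> (\<lambda>\<rho>. replace ?T' p (Node \<rho> Leaf Leaf)) ` grow_rules B d ?T' p" using gr eq by (metis image_eqI)
  then show ?thesis unfolding grow_prop_def using g gr fing finr
    by (auto simp: set_pmf_of_set_mem[OF fing g] set_pmf_of_set_mem[OF finr gr] intro!: bexI[of _ p])
qed

lemma change_rev:
  assumes V: "valid_tree B d T" and c: "p \<in> changeable B d T" "\<rho>' \<in> change_rules B d T p"
  shows "T \<in> set_pmf (change_prop B d (set_rule_at T p \<rho>'))"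
proof -
  let ?T' = "set_rule_at T p \<rho>'"
  have p: "p \<in> paths T" "subtree T p \<noteq> Leaf" using c by (auto simp: changeable_def int_paths_def)
  obtain \<rho> l r where N: "subtree T p = Node \<rho> l r" using p(2) by (cases "subtree T p") auto
  have rho: "\<rho> \<in> rules B d" using valid_tree_rule_at[OF V p(1) N] .
  have neq: "\<rho>' \<noteq> \<rho>" using c N by (auto simp: change_rules_def)
  have T': "?T' = replace T p (Node \<rho>' l r)" using N by (simp add: set_rule_at_def)
  have sub': "subtree ?T' p = Node \<rho>' l r" using T' subtree_replace[OF p(1)] by simp
  have bk: "set_rule_at ?T' p \<rho> = T"
    using sub' T' N replace_subtree[of T p] by (simp add: set_rule_at_def)
  have cr: "\<rho> \<in> change_rules B d ?T' p" using rho neq sub' bk V by (auto simp: change_rules_def)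
  have pi: "p \<in> int_paths ?T'" using sub' paths_replace_self[OF p(1)] T' by (auto simp: int_paths_def)
  have ch: "p \<in> changeable B d ?T'" using pi cr by (auto simp: changeable_def)
  have finc: "finite (changeable B d ?T')"
    using finite_paths[of ?T'] by (rule rev_finite_subset) (auto simp: changeable_def int_paths_def)
  have finr: "finite (change_rules B d ?T' p)"
    using finite_rules by (rule rev_finite_subset) (auto simp: change_rules_def)
  have "T \<in> set_rule_at ?T' p ` change_rules B d ?T' p" using cr bk by (metis image_eqI)
  then show ?thesis unfolding change_prop_def using ch cr finc finr
    by (auto simp: set_pmf_of_set_mem[OF finc ch] set_pmf_of_set_mem[OF finr cr] intro!: bexI[of _ p])
qed

lemma swap_result_local:
  assumes "p \<in> paths T"
  shows "swap_result T p b = replace T p (swap_result (subtree T p) [] b)"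
  using assms
  by (simp add: swap_result_def set_rule_at_def Let_def subtree_append replace_append subtree_replace)

lemma swap_local_inv:
  assumes V: "valid_in d C (Node \<rho> l r)" and nl: "subtree (Node \<rho> l r) [b] \<noteq> Leaf"
  shows "swap_result (swap_result (Node \<rho> l r) [] b) [] b = Node \<rho> l r"
    and "subtree (swap_result (Node \<rho> l r) [] b) [b] \<noteq> Leaf"
proof -
  have ne: "\<And>\<sigma> a c. l = Node \<sigma> a c \<Longrightarrow> \<sigma> \<noteq> \<rho>" "\<And>\<sigma> a c. r = Node \<sigma> a c \<Longrightarrow> \<sigma> \<noteq> \<rho>"
    using valid_child_rule_neq[OF V] by blast+
  show "swap_result (swap_result (Node \<rho> l r) [] b) [] b = Node \<rho> l r"
    using nl ne
    by (cases l; cases r; cases b) (auto simp: swap_result_def set_rule_at_def Let_def)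
  show "subtree (swap_result (Node \<rho> l r) [] b) [b] \<noteq> Leaf"
    using nl ne
    by (cases l; cases r; cases b) (auto simp: swap_result_def set_rule_at_def Let_def)
qed

lemma swap_rev:
  assumes V: "valid_tree B d T" and sp: "(p, b) \<in> swap_pairs B d T"
  shows "T \<in> set_pmf (swap_prop B d (swap_result T p b))"
proof -
  let ?T' = "swap_result T p b"
  have p: "p \<in> paths T" "subtree T p \<noteq> Leaf" "subtree T (p @ [b]) \<noteq> Leaf"
    using sp by (auto simp: swap_pairs_def int_paths_def)
  obtain \<rho> l r where N: "subtree T p = Node \<rho> l r" using p(2) by (cases "subtree T p") auto
  obtain C' where C': "valid_in d C' (Node \<rho> l r)"
    using valid_subtree[OF V[unfolded valid_tree_def] p(1)] N by auto
  have nl: "subtree (Node \<rho> l r) [b] \<noteq> Leaf" using p(3) N by (simp add: subtree_append)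
  let ?N' = "swap_result (Node \<rho> l r) [] b"
  have T': "?T' = replace T p ?N'" using swap_result_local[OF p(1)] N by simp
  have sub': "subtree ?T' p = ?N'" using T' subtree_replace[OF p(1)] by simp
  have nl': "subtree ?N' [b] \<noteq> Leaf" using swap_local_inv(2)[OF C' nl] .
  have N'ne: "?N' \<noteq> Leaf" using nl' by auto
  have pT': "p \<in> paths ?T'" using T' paths_replace_self[OF p(1)] by simp
  have bN': "[b] \<in> paths ?N'" using N'ne by (cases ?N'; cases b) auto
  have pbT': "p @ [b] \<in> paths ?T'" using T' paths_replace[OF p(1) bN'] by simp
  have rev: "swap_result ?T' p b = T"
    using swap_result_local[OF pT'] sub' T' swap_local_inv(1)[OF C' nl] N replace_subtree[of T p]
    by simp
  have mem: "(p, b) \<in> swap_pairs B d ?T'"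
    using pT' pbT' sub' N'ne nl' rev V
    by (auto simp: swap_pairs_def int_paths_def subtree_append)
  have fin: "finite (swap_pairs B d ?T')"
    using finite_subset[of "swap_pairs B d ?T'" "paths ?T' \<times> UNIV"] finite_paths[of ?T']
    by (auto simp: swap_pairs_def int_paths_def)
  have "T \<in> (\<lambda>(p, b). swap_result ?T' p b) ` swap_pairs B d ?T'"
    using mem rev by (metis (no_types, lifting) case_prod_conv image_eqI)
  then show ?thesis unfolding swap_prop_def using mem fin
    by (auto simp: set_pmf_of_set_mem[OF fin mem])
qed

definition mvf :: "real \<Rightarrow> real \<Rightarrow> real \<Rightarrow> real \<Rightarrow> real \<Rightarrow> nat \<Rightarrow> real" where
  "mvf p0 pg pp pc ps = (\<lambda>k. if k = 0 then p0 else if k = 1 then pg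
      else if k = 2 then pp else if k = 3 then pc else if k = 4 then ps else 0)"

lemma move_pmf_pmf:
  assumes "p0 \<ge> 0" "pg \<ge> 0" "pp \<ge> 0" "pc \<ge> 0" "ps \<ge> 0" "p0 + pg + pp + pc + ps = 1"
  shows "pmf (move_pmf p0 pg pp pc ps) k = mvf p0 pg pp pc ps k"
proof -
  have nn: "\<And>k. 0 \<le> mvf p0 pg pp pc ps k" using assms by (auto simp: mvf_def)
  have "(\<integral>\<^sup>+k. ennreal (mvf p0 pg pp pc ps k) \<partial>count_space UNIV) = (\<Sum>k\<in>{..<5}. ennreal (mvf p0 pg pp pc ps k))"
    by (rule nn_integral_count_space') (auto simp: mvf_def)
  also have "\<dots> = ennreal (\<Sum>k\<in>{..<5}. mvf p0 pg pp pc ps k)"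
    using nn by (simp add: sum_ennreal)
  also have "(\<Sum>k\<in>{..<5}. mvf p0 pg pp pc ps k) = 1"
    using assms(6) by (simp add: mvf_def numeral_eq_Suc)
  finally have pr: "(\<integral>\<^sup>+k. ennreal (mvf p0 pg pp pc ps k) \<partial>count_space UNIV) = 1" by simp
  show ?thesis unfolding move_pmf_def mvf_def[symmetric]
    using pmf_embed_pmf[OF nn pr] by simp
qed

lemma set_move_pmf:
  assumes "p0 \<ge> 0" "pg \<ge> 0" "pp \<ge> 0" "pc \<ge> 0" "ps \<ge> 0" "p0 + pg + pp + pc + ps = 1"
  shows "set_pmf (move_pmf p0 pg pp pc ps) = {k. mvf p0 pg pp pc ps k \<noteq> 0}"
  using move_pmf_pmf[OF assms] by (auto simp: set_pmf_eq)

lemma fin_growable: "finite (growable B d T)"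
  using finite_paths[of T] by (rule rev_finite_subset) (auto simp: growable_def leaf_paths_def)
lemma fin_grow_rules: "finite (grow_rules B d T p)"
  using finite_rules by (rule rev_finite_subset) (auto simp: grow_rules_def)
lemma fin_prunable: "finite (prunable T)"
  using finite_paths[of T] by (rule rev_finite_subset) (auto simp: prunable_def int_paths_def)
lemma fin_changeable: "finite (changeable B d T)"
  using finite_paths[of T] by (rule rev_finite_subset) (auto simp: changeable_def int_paths_def)
lemma fin_change_rules: "finite (change_rules B d T p)"
  using finite_rules by (rule rev_finite_subset) (auto simp: change_rules_def)
lemma fin_swap_pairs: "finite (swap_pairs B d T)"
  using finite_subset[of "swap_pairs B d T" "paths T \<times> UNIV"] finite_paths[of T]
  by (auto simp: swap_pairs_def int_paths_def)

lemma tree_rev: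
  assumes probs: "p0 > 0" "pg > 0" "pp > 0" "pc \<ge> 0" "ps \<ge> 0" "p0 + pg + pp + pc + ps = 1"
    and V: "valid_tree B d T" and T': "T' \<in> set_pmf (tree_prop B d p0 pg pp pc ps T)"
  shows "T \<in> set_pmf (tree_prop B d p0 pg pp pc ps T')"
proof -
  have sm: "set_pmf (move_pmf p0 pg pp pc ps) = {k. mvf p0 pg pp pc ps k \<noteq> 0}"
    using set_move_pmf probs by simp
  have intro: "T \<in> set_pmf (tree_prop B d p0 pg pp pc ps T')"
    if "mvf p0 pg pp pc ps k \<noteq> 0" "T \<in> set_pmf (if k = 1 then grow_prop B d T' else if k = 2 then prune_prop T'
          else if k = 3 then change_prop B d T' else if k = 4 then swap_prop B d T'
          else return_pmf T')" for k
    using that unfolding tree_prop_def set_bind_pmf by (intro UN_I[of k]) (simp_all add: sm)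
  obtain k where k: "mvf p0 pg pp pc ps k \<noteq> 0" "T' \<in> set_pmf (if k = 1 then grow_prop B d T else if k = 2 then prune_prop T
          else if k = 3 then change_prop B d T else if k = 4 then swap_prop B d T
          else return_pmf T)"
    using T' unfolding tree_prop_def by (auto simp: sm)
  show ?thesis
  proof (cases "T' = T")
    case True then show ?thesis using intro[of 0] probs by (simp add: mvf_def)
  next
    case False
    consider "k = 1" | "k = 2" | "k = 3" | "k = 4" | "k \<notin> {1,2,3,4}" by blast
    then show ?thesis
    proof cases
      case 1
      then obtain p \<rho> where g: "p \<in> growable B d T" "\<rho> \<in> grow_rules B d T p"
         "T' = replace T p (Node \<rho> Leaf Leaf)"
      proof -
        have T'g: "T' \<in> set_pmf (grow_prop B d T)" using k(2) 1 by simp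
        have ne: "growable B d T \<noteq> {}" using T'g False by (auto simp: grow_prop_def)
        obtain p where p: "p \<in> growable B d T"
          "T' \<in> set_pmf (map_pmf (\<lambda>\<rho>. replace T p (Node \<rho> Leaf Leaf)) (pmf_of_set (grow_rules B d T p)))"
          using T'g ne by (auto simp: grow_prop_def fin_growable)
        have "grow_rules B d T p \<noteq> {}" using p(1) by (simp add: growable_def)
        then show ?thesis using p that by (auto simp: fin_grow_rules)
      qed
      show ?thesis using intro[of 2] grow_rev[OF g(1,2)] g(3) probs by (simp add: mvf_def)
    next
      case 2
      then obtain p where g: "p \<in> prunable T" "T' = replace T p Leaf"
        using k(2) False unfolding prune_prop_def
        by (auto split: if_splits simp: set_pmf_of_set fin_prunable)
      show ?thesis using intro[of 1] prune_rev[OF V g(1)] g(2) probs by (simp add: mvf_def)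
    next
      case 3
      then obtain p \<rho> where g: "p \<in> changeable B d T" "\<rho> \<in> change_rules B d T p"
         "T' = set_rule_at T p \<rho>"
      proof -
        have T'g: "T' \<in> set_pmf (change_prop B d T)" using k(2) 3 by simp
        have ne: "changeable B d T \<noteq> {}" using T'g False by (auto simp: change_prop_def)
        obtain p where p: "p \<in> changeable B d T"
          "T' \<in> set_pmf (map_pmf (\<lambda>\<rho>. set_rule_at T p \<rho>) (pmf_of_set (change_rules B d T p)))"
          using T'g ne by (auto simp: change_prop_def fin_changeable)
        have "change_rules B d T p \<noteq> {}" using p(1) by (simp add: changeable_def)
        then show ?thesis using p that by (auto simp: fin_change_rules)
      qed
      show ?thesis using intro[of 3] change_rev[OF V g(1,2)] g(3) k(1) 3 by (simp add: mvf_def)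
    next
      case 4
      then obtain p b where g: "(p, b) \<in> swap_pairs B d T" "T' = swap_result T p b"
        using k(2) False unfolding swap_prop_def
        by (auto split: if_splits simp: set_pmf_of_set fin_swap_pairs)
      show ?thesis using intro[of 4] swap_rev[OF V g(1)] g(2) k(1) 4 by (simp add: mvf_def)
    next
      case 5
      then show ?thesis using k(2) False by auto
    qed
  qed
qed

fun nint :: "tree \<Rightarrow> nat" where
  "nint Leaf = 0" | "nint (Node \<rho> l r) = Suc (nint l + nint r)"
fun rset :: "tree \<Rightarrow> (nat \<times> nat) set" where
  "rset Leaf = {}" | "rset (Node \<rho> l r) = insert \<rho> (rset l \<union> rset r)"

lemma fin_trees: "finite R \<Longrightarrow> finite {T. rset T \<subseteq> R \<and> nint T \<le> k}"
proof (induction k)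
  case 0
  have "{T. rset T \<subseteq> R \<and> nint T \<le> 0} \<subseteq> {Leaf}" by (auto elim: nint.elims)
  then show ?case using finite_subset by blast
next
  case (Suc k)
  let ?A = "{T. rset T \<subseteq> R \<and> nint T \<le> k}"
  have "{T. rset T \<subseteq> R \<and> nint T \<le> Suc k} \<subseteq> insert Leaf ((\<lambda>(\<rho>, l, r). Node \<rho> l r) ` (R \<times> ?A \<times> ?A))"
  proof
    fix T assume T: "T \<in> {T. rset T \<subseteq> R \<and> nint T \<le> Suc k}"
    show "T \<in> insert Leaf ((\<lambda>(\<rho>, l, r). Node \<rho> l r) ` (R \<times> ?A \<times> ?A))"
    proof (cases T)
      case Leaf then show ?thesis by simp
    next
      case (Node \<rho> l r)
      then show ?thesis using T by (auto intro!: image_eqI[of _ _ "(\<rho>, l, r)"])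
    qed
  qed
  moreover have "finite (insert Leaf ((\<lambda>(\<rho>, l, r). Node \<rho> l r) ` (R \<times> ?A \<times> ?A)))"
    using Suc by auto
  ultimately show ?case using finite_subset by blast
qed

lemma valid_empty: "valid_in d {} T \<Longrightarrow> T = Leaf" by (cases T) auto

lemma valid_nint: "valid_in d C T \<Longrightarrow> finite C \<Longrightarrow> C \<noteq> {} \<Longrightarrow> nint T < card C"
proof (induction T arbitrary: C)
  case Leaf then show ?case by (simp add: card_gt_0_iff)
next
  case (Node \<rho> l r)
  let ?Cl = "C \<inter> le_set \<rho>" and ?Cr = "C \<inter> gt_set \<rho>"
  have a: "nint l < card ?Cl" using Node by auto
  have b: "nint r < card ?Cr" using Node by auto
  have "card C = card ?Cl + card ?Cr"
    using Node.prems(2) by (subst card_Un_disjoint[symmetric]) (auto simp: le_set_def gt_set_def intro!: arg_cong[of _ _ card])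
  then show ?case using a b by simp
qed

lemma valid_rset: "valid_in d C T \<Longrightarrow> C \<subseteq> Xset B d \<Longrightarrow> rset T \<subseteq> rules B d"
proof (induction T arbitrary: C)
  case Leaf then show ?case by simp
next
  case (Node \<rho> l r)
  have "\<rho> \<in> rules B d" using valid_node_rule[OF Node.prems] .
  moreover have "rset l \<subseteq> rules B d" using Node by auto
  moreover have "rset r \<subseteq> rules B d" using Node by auto
  ultimately show ?case by simp
qed

lemma finite_Xset: "finite (Xset B d)"
proof -
  have "Xset B d \<subseteq> {xs. set xs \<subseteq> {1..B} \<and> length xs = d}"
    by (auto simp: Xset_def in_set_conv_nth)
  then show ?thesis using finite_lists_length_eq[of "{1..B}" d] finite_subset by blast
qed

lemma finite_valid: "finite {T. valid_tree B d T}"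
proof -
  have "{T. valid_tree B d T} \<subseteq> {T. rset T \<subseteq> rules B d \<and> nint T \<le> card (Xset B d)}"
  proof
    fix T assume "T \<in> {T. valid_tree B d T}"
    then have v: "valid_tree B d T" by simp
    then have "rset T \<subseteq> rules B d" unfolding valid_tree_def using valid_rset by blast
    moreover have "nint T \<le> card (Xset B d)"
    proof (cases "Xset B d = {}")
      case True
      then have "T = Leaf" using v valid_empty[of d T] by (simp add: valid_tree_def)
      then show ?thesis by simp
    next
      case False then show ?thesis using v valid_nint[of d "Xset B d" T] finite_Xset
        by (auto simp: valid_tree_def)
    qed
    ultimately show "T \<in> {T. rset T \<subseteq> rules B d \<and> nint T \<le> card (Xset B d)}" by simp
  qed
  then show ?thesis using fin_trees[OF finite_rules] finite_subset by blast
qed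

lemma finite_TSE: "finite (TSE_space B d m)"
proof -
  have "TSE_space B d m \<subseteq> {E. set E \<subseteq> {T. valid_tree B d T} \<and> length E = m}"
    by (auto simp: TSE_space_def)
  then show ?thesis using finite_lists_length_eq[OF finite_valid] finite_subset by blast
qed

lemma TSE_nonempty: "replicate m Leaf \<in> TSE_space B d m"
  by (auto simp: TSE_space_def valid_tree_def)

lemma set_ens_prop:
  assumes "length E > 0"
  shows "set_pmf (ens_prop B d p0 pg pp pc ps E) =
    (\<Union>i\<in>{..<length E}. (\<lambda>T. E[i := T]) ` set_pmf (tree_prop B d p0 pg pp pc ps (E ! i)))"
proof -
  have "set_pmf (pmf_of_set {..<length E}) = {..<length E}" using assms by (intro set_pmf_of_set) auto
  then show ?thesis by (simp add: ens_prop_def)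
qed

lemma ens_rev:
  assumes probs: "p0 > 0" "pg > 0" "pp > 0" "pc \<ge> 0" "ps \<ge> 0" "p0 + pg + pp + pc + ps = 1"
    and E: "E \<in> TSE_space B d m" and m: "m \<ge> 1"
    and E': "E' \<in> set_pmf (ens_prop B d p0 pg pp pc ps E)"
  shows "E \<in> set_pmf (ens_prop B d p0 pg pp pc ps E')"
proof -
  have len: "length E = m" using E by (simp add: TSE_space_def)
  then obtain i T' where i: "i < length E" "T' \<in> set_pmf (tree_prop B d p0 pg pp pc ps (E ! i))"
    "E' = E[i := T']"
    using E' m set_ens_prop[of E] by auto
  have V: "valid_tree B d (E ! i)" using E i(1) by (auto simp: TSE_space_def)
  have "E ! i \<in> set_pmf (tree_prop B d p0 pg pp pc ps T')" using tree_rev[OF probs V i(2)] .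
  moreover have "E'[i := E ! i] = E" using i by simp
  moreover have "E' ! i = T'" "length E' = length E" using i by auto
  ultimately have "E \<in> (\<lambda>T. E'[i := T]) ` set_pmf (tree_prop B d p0 pg pp pc ps (E' ! i))"
    by (metis image_eqI)
  moreover have "i \<in> {..<length E'}" "length E' > 0" using i by auto
  ultimately show ?thesis unfolding set_ens_prop[OF \<open>length E' > 0\<close>] by blast
qed

lemma ens_self:
  assumes "p0 > 0" "pg \<ge> 0" "pp \<ge> 0" "pc \<ge> 0" "ps \<ge> 0" "p0 + pg + pp + pc + ps = 1"
    and "length E > 0"
  shows "E \<in> set_pmf (ens_prop B d p0 pg pp pc ps E)"
proof -
  have "E ! 0 \<in> set_pmf (tree_prop B d p0 pg pp pc ps (E ! 0))"
    unfolding tree_prop_def set_bind_pmf using assms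
    by (intro UN_I[of 0]) (simp_all add: set_move_pmf mvf_def)
  then have "E \<in> (\<lambda>T. E[0 := T]) ` set_pmf (tree_prop B d p0 pg pp pc ps (E ! 0))"
    by (metis image_eqI list_update_id)
  moreover have "0 \<in> {..<length E}" using assms(7) by auto
  ultimately show ?thesis unfolding set_ens_prop[OF assms(7)] by blast
qed

definition Rd where "Rd B d p0 pg pp pc ps = {(E, E'). E' \<in> set_pmf (ens_prop B d p0 pg pp pc ps E)}"

lemma Rd_pow: "(E, E') \<in> (Rd B d p0 pg pp pc ps) ^^ k \<Longrightarrow> E' \<in> set_pmf (ens_prop_pow B d p0 pg pp pc ps k E)"
proof (induction k arbitrary: E')
  case 0 then show ?case by simp
next
  case (Suc k)
  then obtain E1 where "(E, E1) \<in> (Rd B d p0 pg pp pc ps) ^^ k" "(E1, E') \<in> Rd B d p0 pg pp pc ps"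
    by auto
  then show ?case using Suc.IH by (auto simp: Rd_def)
qed

lemma relpow_mono_aux: "(R::('a \<times> 'a) set) \<subseteq> S \<Longrightarrow> R ^^ k \<subseteq> S ^^ k"
proof (induction k)
  case 0 show ?case by simp
next
  case (Suc k) then show ?case using relcomp_mono[OF Suc.IH Suc.prems] by simp
qed

lemma Qr_pos:
  assumes probs: "p0 > 0" "pg > 0" "pp > 0" "pc \<ge> 0" "ps \<ge> 0" "p0 + pg + pp + pc + ps = 1"
    and m: "m \<ge> 1" and r: "enat r \<ge> tse_diam B d p0 pg pp pc ps m"
    and E: "E \<in> TSE_space B d m" and E': "E' \<in> TSE_space B d m"
  shows "E' \<in> set_pmf (ens_prop_pow B d p0 pg pp pc ps r E)"
proof -
  let ?R = "prop_edges B d p0 pg pp pc ps m"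
  let ?D = "Rd B d p0 pg pp pc ps"
  have "graph_dist ?R E E' \<le> tse_diam B d p0 pg pp pc ps m"
    unfolding tse_diam_def using E E' by (intro SUP_upper2[of "(E, E')"]) auto
  with r have gd: "graph_dist ?R E E' \<le> enat r" by simp
  obtain k where k: "k \<le> r" "(E, E') \<in> ?R ^^ k"
  proof (rule ccontr)
    assume "\<not> thesis"
    then have "\<forall>k. (E, E') \<in> ?R ^^ k \<longrightarrow> k > r" using that by (meson not_le)
    then have "enat (Suc r) \<le> graph_dist ?R E E'"
      unfolding graph_dist_def by (intro INF_greatest) auto
    with gd have "enat (Suc r) \<le> enat r" by (rule order_trans[rotated])
    then show False by simp
  qed
  have RD: "?R \<subseteq> ?D"
  proof
    fix x assume x: "x \<in> ?R"
    obtain a b where ab: "x = (a, b)" by (cases x)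
    have a: "a \<in> TSE_space B d m" and b: "b \<in> TSE_space B d m"
      and o: "b \<in> set_pmf (ens_prop B d p0 pg pp pc ps a) \<or> a \<in> set_pmf (ens_prop B d p0 pg pp pc ps b)"
      using x ab by (auto simp: prop_edges_def set_pmf_iff)
    then have "b \<in> set_pmf (ens_prop B d p0 pg pp pc ps a)"
      using ens_rev[OF probs b m] by blast
    then show "x \<in> ?D" using ab by (simp add: Rd_def)
  qed
  have k': "(E, E') \<in> ?D ^^ k" using relpow_mono_aux[OF RD] k(2) by blast
  have "length E' > 0" using E' m by (simp add: TSE_space_def)
  then have self: "(E', E') \<in> ?D"
    using ens_self[OF probs(1) less_imp_le[OF probs(2)] less_imp_le[OF probs(3)] probs(4-6)]
    by (simp add: Rd_def)
  have "(E, E') \<in> ?D ^^ (k + j)" for j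
    by (induction j) (use k' self in auto)
  from this[of "r - k"] k(1) have "(E, E') \<in> ?D ^^ r" by simp
  then show ?thesis using Rd_pow by blast
qed

lemma pmf_sum_restrict:
  assumes "finite S" "set_pmf \<mu> \<subseteq> S"
  shows "measure_pmf.prob \<mu> A = (\<Sum>y\<in>A \<inter> S. pmf \<mu> y)"
proof -
  have "measure_pmf.prob \<mu> A = measure_pmf.prob \<mu> (A \<inter> set_pmf \<mu>)" by (simp add: measure_Int_set_pmf)
  also have "A \<inter> set_pmf \<mu> = (A \<inter> S) \<inter> set_pmf \<mu>" using assms(2) by auto
  also have "measure_pmf.prob \<mu> \<dots> = measure_pmf.prob \<mu> (A \<inter> S)" by (simp add: measure_Int_set_pmf)
  also have "\<dots> = (\<Sum>y\<in>A \<inter> S. pmf \<mu> y)" using assms(1) by (simp add: measure_measure_pmf_finite)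
  finally show ?thesis .
qed

lemma tv_bound:
  assumes fin: "finite S" and sm: "set_pmf \<mu> \<subseteq> S" and sp: "set_pmf \<pi> \<subseteq> S"
    and lb: "\<forall>y\<in>S. pmf \<mu> y \<ge> \<beta> * pmf \<pi> y" and b: "0 \<le> \<beta>" "\<beta> \<le> 1"
  shows "tv_dist \<mu> \<pi> \<le> 1 - \<beta>"
  unfolding tv_dist_def
proof (rule cSUP_least)
  show "UNIV \<noteq> {}" by simp
  fix A
  let ?a = "\<Sum>y\<in>S \<inter> A. pmf \<mu> y" and ?b = "\<Sum>y\<in>S \<inter> A. pmf \<pi> y"
  let ?a' = "\<Sum>y\<in>S - A. pmf \<mu> y" and ?b' = "\<Sum>y\<in>S - A. pmf \<pi> y"
  have s1: "?a + ?a' = 1" using sum_pmf_eq_1[OF fin sm] sum.Int_Diff[OF fin, of "pmf \<mu>" A] by simp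
  have s2: "?b + ?b' = 1" using sum_pmf_eq_1[OF fin sp] sum.Int_Diff[OF fin, of "pmf \<pi>" A] by simp
  have ab: "?a \<ge> \<beta> * ?b" unfolding sum_distrib_left by (rule sum_mono) (use lb in auto)
  have ab': "?a' \<ge> \<beta> * ?b'" unfolding sum_distrib_left by (rule sum_mono) (use lb in auto)
  have bnn: "?b \<ge> 0" "?b' \<ge> 0" by (simp_all add: sum_nonneg)
  have m1: "(1 - \<beta>) * ?b \<le> 1 - \<beta>" by (rule mult_left_le) (use s2 bnn b in auto)
  have m2: "(1 - \<beta>) * ?b' \<le> 1 - \<beta>" by (rule mult_left_le) (use s2 bnn b in auto)
  have q1: "(1 - \<beta>) * ?b = ?b - \<beta> * ?b" "(1 - \<beta>) * ?b' = ?b' - \<beta> * ?b'" by (simp_all add: algebra_simps)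
  have "\<bar>?a - ?b\<bar> \<le> 1 - \<beta>" using s1 s2 ab ab' m1 m2 q1 by linarith
  moreover have "A \<inter> S = S \<inter> A" by blast
  ultimately show "\<bar>measure_pmf.prob \<mu> A - measure_pmf.prob \<pi> A\<bar> \<le> 1 - \<beta>"
    using pmf_sum_restrict[OF fin sm, of A] pmf_sum_restrict[OF fin sp, of A] by simp
qed

lemma kernel_pow_Suc: "kernel_pow K (Suc t) x = bind_pmf (kernel_pow K t x) K"
  by (simp add: kernel_pow_def)

lemma doeblin:
  fixes K :: "'a \<Rightarrow> 'a pmf"
  assumes fin: "finite S" and sp: "set_pmf \<pi> \<subseteq> S" and sk: "\<forall>x\<in>S. set_pmf (K x) \<subseteq> S"
    and stat: "\<forall>y\<in>S. (\<Sum>z\<in>S. pmf \<pi> z * pmf (K z) y) = pmf \<pi> y"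
    and minor: "\<forall>x\<in>S. \<forall>y\<in>S. pmf (K x) y \<ge> \<alpha> * pmf \<pi> y"
    and a: "0 < \<alpha>" "\<alpha> \<le> 1" and x: "x \<in> S"
  shows "tv_dist (kernel_pow K t x) \<pi> \<le> (1 - \<alpha>) ^ t"
proof -
  have main: "set_pmf (kernel_pow K t x) \<subseteq> S \<and> (\<forall>y\<in>S. pmf (kernel_pow K t x) y \<ge> (1 - (1 - \<alpha>) ^ t) * pmf \<pi> y)"
  proof (induction t)
    case 0 then show ?case using x by (simp add: kernel_pow_def)
  next
    case (Suc t)
    let ?\<mu> = "kernel_pow K t x" and ?\<beta> = "1 - (1 - \<alpha>) ^ t"
    have sm: "set_pmf ?\<mu> \<subseteq> S" and lb: "\<forall>y\<in>S. pmf ?\<mu> y \<ge> ?\<beta> * pmf \<pi> y" using Suc by auto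
    have s1: "set_pmf (kernel_pow K (Suc t) x) \<subseteq> S" using sm sk by (auto simp: kernel_pow_Suc)
    have "pmf (kernel_pow K (Suc t) x) y \<ge> (1 - (1 - \<alpha>) ^ Suc t) * pmf \<pi> y" if y: "y \<in> S" for y
    proof -
      have e1: "pmf (kernel_pow K (Suc t) x) y = (\<Sum>z\<in>S. pmf (K z) y * pmf ?\<mu> z)"
        unfolding kernel_pow_Suc pmf_bind using sm fin
        by (intro integral_measure_pmf_real) auto
      have e2: "(\<Sum>z\<in>S. pmf (K z) y * pmf ?\<mu> z) = (\<Sum>z\<in>S. (pmf ?\<mu> z - ?\<beta> * pmf \<pi> z) * pmf (K z) y) + ?\<beta> * (\<Sum>z\<in>S. pmf \<pi> z * pmf (K z) y)"
        by (simp add: algebra_simps sum.distrib sum_distrib_left sum_subtractf)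
      have e3: "?\<beta> * (\<Sum>z\<in>S. pmf \<pi> z * pmf (K z) y) = ?\<beta> * pmf \<pi> y" using stat y by simp
      have e4: "(\<Sum>z\<in>S. (pmf ?\<mu> z - ?\<beta> * pmf \<pi> z) * pmf (K z) y) \<ge> (\<Sum>z\<in>S. (pmf ?\<mu> z - ?\<beta> * pmf \<pi> z) * (\<alpha> * pmf \<pi> y))"
        using lb minor y by (intro sum_mono mult_left_mono) auto
      have e5: "(\<Sum>z\<in>S. (pmf ?\<mu> z - ?\<beta> * pmf \<pi> z) * (\<alpha> * pmf \<pi> y)) = (1 - ?\<beta>) * (\<alpha> * pmf \<pi> y)"
        using sum_pmf_eq_1[OF fin sm] sum_pmf_eq_1[OF fin sp]
        by (simp add: sum_distrib_right[symmetric] sum_subtractf sum_distrib_left[symmetric])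
      have e6: "(1 - ?\<beta>) * (\<alpha> * pmf \<pi> y) + ?\<beta> * pmf \<pi> y = (1 - (1 - \<alpha>) ^ Suc t) * pmf \<pi> y"
        by (simp add: algebra_simps)
      show ?thesis using e1 e2 e3 e4 e5 e6 by linarith
    qed
    then show ?case using s1 by auto
  qed
  have "0 \<le> (1 - \<alpha>) ^ t" "(1 - \<alpha>) ^ t \<le> 1" using a by (simp_all add: power_le_one)
  then show ?thesis using tv_bound[OF fin _ sp, of "kernel_pow K t x" "1 - (1 - \<alpha>) ^ t"] main by simp
qed

lemma bern_map:
  assumes "0 \<le> a" "a \<le> 1"
  shows "pmf (map_pmf (\<lambda>acc. if acc then z else x) (bernoulli_pmf a)) y
       = (if z = y then a else 0) + (if x = y then 1 - a else 0)"
proof -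
  have "pmf (map_pmf (\<lambda>acc. if acc then z else x) (bernoulli_pmf a)) y
      = measure_pmf.prob (bernoulli_pmf a) ((\<lambda>acc. if acc then z else x) -` {y})"
    by (simp add: pmf_map)
  also have "\<dots> = (\<Sum>b\<in>(\<lambda>acc. if acc then z else x) -` {y}. pmf (bernoulli_pmf a) b)"
    by (rule measure_measure_pmf_finite) simp
  also have "\<dots> = (\<Sum>b\<in>UNIV. if (if b then z else x) = y then pmf (bernoulli_pmf a) b else 0)"
    by (rule sum.mono_neutral_cong_left) auto
  also have "\<dots> = (if z = y then a else 0) + (if x = y then 1 - a else 0)"
    using assms by (simp add: UNIV_bool)
  finally show ?thesis .
qed

lemma int_if_eq:
  "(\<integral>z. (if z = y then c else 0) \<partial>measure_pmf M) = (c::real) * pmf M y"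
  by (subst integral_measure_pmf_real[of "{y}"]) (auto split: if_splits)

lemma key_min:
  fixes w1 w2 q1 q2 :: real
  assumes "w1 > 0" "w2 > 0" "q1 \<ge> 0" "q2 \<ge> 0"
  shows "w1 * q1 * min ((q2 * w2) / (q1 * w1)) 1 = min (q1 * w1) (q2 * w2)"
proof (cases "q1 = 0")
  case True then show ?thesis using assms by simp
next
  case False
  then have pos: "q1 * w1 > 0" using assms by simp
  have nz: "q1 \<noteq> 0" "w1 \<noteq> 0" using False assms by auto
  show ?thesis
  proof (cases "q2 * w2 \<le> q1 * w1")
    case True
    then have "(q2 * w2) / (q1 * w1) \<le> 1" using pos by simp
    then have m: "min ((q2 * w2) / (q1 * w1)) 1 = (q2 * w2) / (q1 * w1)" by simp
    have "w1 * q1 * ((q2 * w2) / (q1 * w1)) = q2 * w2" using nz by (simp add: field_simps)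
    then show ?thesis using True m by simp
  next
    case False
    then have "\<not> (q2 * w2) / (q1 * w1) \<le> 1" using pos by simp
    then show ?thesis using False pos by (simp add: min_def mult.commute)
  qed
qed

lemma lazify_pmf: "pmf (lazify P E) y = 1/2 * pmf (P E) y + 1/2 * (if E = y then 1 else 0)"
  unfolding lazify_def pmf_bind by simp

lemma mh_mixing:
  fixes Q :: "'a \<Rightarrow> 'a pmf" and pr :: "'a pmf" and L :: "'a \<Rightarrow> real"
  assumes fin: "finite S" and spr: "set_pmf pr = S" and Lpos: "\<And>E. L E > 0"
    and q: "q > 0" and qb: "\<And>x y. x \<in> S \<Longrightarrow> y \<in> S \<Longrightarrow> pmf (Q x) y \<ge> q"
    and x: "x \<in> S"
  shows "tv_dist (kernel_pow (lazify (\<lambda>E. bind_pmf (Q E) (\<lambda>E'. map_pmf (\<lambda>acc. if acc then E' else E)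
        (bernoulli_pmf (min ((pmf (Q E') E * pmf pr E') / (pmf (Q E) E' * pmf pr E) * (L E' / L E) powr (1 / 1)) 1))))) t x)
      (embed_pmf (\<lambda>E. pmf pr E * L E powr (1 / 1) / (\<Sum>E'\<in>set_pmf pr. pmf pr E' * L E' powr (1 / 1)))) \<le> (1 - q/2) ^ t"
proof -
  define w where "w E = pmf pr E * L E" for E
  define a where "a E E' = min ((pmf (Q E') E * w E') / (pmf (Q E) E' * w E)) 1" for E E'
  define P where "P E = bind_pmf (Q E) (\<lambda>E'. map_pmf (\<lambda>acc. if acc then E' else E) (bernoulli_pmf (a E E')))" for E
  define K where "K = lazify P"
  define Z where "Z = (\<Sum>E\<in>S. w E)"
  define \<pi> where "\<pi> = embed_pmf (\<lambda>E. w E / Z)"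
  have a_eq: "min ((pmf (Q E') E * pmf pr E') / (pmf (Q E) E' * pmf pr E) * (L E' / L E) powr (1 / 1)) 1 = a E E'" for E E'
  proof -
    have "(L E' / L E) powr (1 / 1) = L E' / L E" using Lpos[of E] Lpos[of E'] by simp
    then show ?thesis unfolding a_def w_def by (simp add: times_divide_times_eq mult.assoc)
  qed
  have pi_eq: "(\<lambda>E. pmf pr E * L E powr (1 / 1) / (\<Sum>E'\<in>set_pmf pr. pmf pr E' * L E' powr (1 / 1))) = (\<lambda>E. w E / Z)"
  proof -
    have "\<And>E. L E powr (1 / 1) = L E" using Lpos by (simp add: abs_of_pos)
    then show ?thesis by (simp add: w_def Z_def spr)
  qed
  have goal: "?thesis = (tv_dist (kernel_pow K t x) \<pi> \<le> (1 - q/2) ^ t)"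
    unfolding a_eq pi_eq K_def P_def \<pi>_def ..
  have wpos: "E \<in> S \<Longrightarrow> w E > 0" for E
    using Lpos[of E] spr by (simp add: w_def pmf_positive)
  have w0: "w E = 0" if "E \<notin> S" for E
    using spr that by (simp add: w_def pmf_eq_0_set_pmf)
  have wnn: "w E \<ge> 0" for E using Lpos[of E] by (simp add: w_def)
  have Zpos: "Z > 0" unfolding Z_def using fin x wpos by (intro sum_pos) auto
  have wZ: "w E \<le> Z" if "E \<in> S" for E unfolding Z_def using fin that wnn by (intro member_le_sum) auto
  have a01: "0 \<le> a E E'" "a E E' \<le> 1" for E E' using wnn by (simp_all add: a_def)
  have pi_pmf: "pmf \<pi> E = w E / Z" for E
  proof -
    have nn: "\<And>u. 0 \<le> w u / Z" using wnn Zpos by simp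
    have "(\<integral>\<^sup>+E. ennreal (w E / Z) \<partial>count_space UNIV) = (\<Sum>E\<in>S. ennreal (w E / Z))"
      by (rule nn_integral_count_space') (use fin w0 in auto)
    also have "\<dots> = ennreal (\<Sum>E\<in>S. w E / Z)" using nn by (simp add: sum_ennreal)
    also have "(\<Sum>E\<in>S. w E / Z) = 1" using Zpos by (simp add: sum_divide_distrib[symmetric] Z_def)
    finally have "(\<integral>\<^sup>+E. ennreal (w E / Z) \<partial>count_space UNIV) = 1" by simp
    then show ?thesis unfolding \<pi>_def by (rule pmf_embed_pmf[OF nn])
  qed
  have sp: "set_pmf \<pi> \<subseteq> S"
  proof
    fix y assume "y \<in> set_pmf \<pi>"
    then have "w y \<noteq> 0" by (simp add: set_pmf_iff pi_pmf)
    then show "y \<in> S" using w0 by blast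
  qed
  have P_off: "pmf (P E) y = a E y * pmf (Q E) y" if "y \<noteq> E" for E y
  proof -
    have "pmf (P E) y = (\<integral>z. pmf (map_pmf (\<lambda>acc. if acc then z else E) (bernoulli_pmf (a E z))) y \<partial>measure_pmf (Q E))"
      unfolding P_def pmf_bind ..
    also have "\<dots> = (\<integral>z. (if z = y then a E y else 0) \<partial>measure_pmf (Q E))"
      using that by (intro Bochner_Integration.integral_cong) (auto simp: bern_map a01)
    also have "\<dots> = a E y * pmf (Q E) y" by (rule int_if_eq)
    finally show ?thesis .
  qed
  have K_off: "pmf (K E) y = 1/2 * (a E y * pmf (Q E) y)" if "y \<noteq> E" for E y
    using that P_off[OF that] by (simp add: K_def lazify_pmf)
  have sk: "set_pmf (K E) \<subseteq> S" if "E \<in> S" for E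
  proof
    fix y assume y: "y \<in> set_pmf (K E)"
    show "y \<in> S"
    proof (rule ccontr)
      assume "y \<notin> S"
      then have "y \<noteq> E" "a E y = 0" using that w0 by (auto simp: a_def)
      then have "pmf (K E) y = 0" using K_off[of y E] by simp
      then show False using y by (simp add: set_pmf_iff)
    qed
  qed
  have kq: "w E * (pmf (Q E) y * a E y) = min (pmf (Q E) y * w E) (pmf (Q y) E * w y)" if "E \<in> S" "y \<in> S" for E y
    using key_min[OF wpos[OF that(1)] wpos[OF that(2)] pmf_nonneg pmf_nonneg, of "Q E" y "Q y" E]
    by (simp add: a_def mult.assoc)
  have db: "pmf \<pi> E * pmf (K E) y = pmf \<pi> y * pmf (K y) E" if "E \<in> S" "y \<in> S" for E y
  proof (cases "E = y")
    case True then show ?thesis by simp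
  next
    case False
    have k1: "pmf (K E) y = 1/2 * (a E y * pmf (Q E) y)" using K_off[of y E] False by simp
    have k2: "pmf (K y) E = 1/2 * (a y E * pmf (Q y) E)" using K_off[of E y] False by simp
    have "pmf \<pi> E * pmf (K E) y = 1/(2*Z) * (w E * (pmf (Q E) y * a E y))"
      unfolding pi_pmf k1 by (simp add: field_simps)
    also have "\<dots> = 1/(2*Z) * min (pmf (Q E) y * w E) (pmf (Q y) E * w y)" using kq[OF that] by simp
    also have "\<dots> = 1/(2*Z) * (w y * (pmf (Q y) E * a y E))" using kq[OF that(2,1)] by (simp add: min.commute)
    also have "\<dots> = pmf \<pi> y * pmf (K y) E"
      unfolding pi_pmf k2 by (simp add: field_simps)
    finally show ?thesis .
  qed
  have stat: "\<forall>y\<in>S. (\<Sum>z\<in>S. pmf \<pi> z * pmf (K z) y) = pmf \<pi> y"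
  proof
    fix y assume y: "y \<in> S"
    have "(\<Sum>z\<in>S. pmf \<pi> z * pmf (K z) y) = (\<Sum>z\<in>S. pmf \<pi> y * pmf (K y) z)"
      using db y by (intro sum.cong) auto
    also have "\<dots> = pmf \<pi> y" using sum_pmf_eq_1[OF fin sk[OF y]] by (simp add: sum_distrib_left[symmetric])
    finally show "(\<Sum>z\<in>S. pmf \<pi> z * pmf (K z) y) = pmf \<pi> y" .
  qed
  have q1: "q \<le> 1" using qb[OF x x] pmf_le_1[of "Q x" x] by simp
  have minor: "\<forall>x\<in>S. \<forall>y\<in>S. pmf (K x) y \<ge> q/2 * pmf \<pi> y"
  proof (intro ballI)
    fix E y assume E: "E \<in> S" and y: "y \<in> S"
    show "pmf (K E) y \<ge> q/2 * pmf \<pi> y"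
    proof (cases "E = y")
      case True
      have "pmf (K E) y \<ge> 1/2" using True by (simp add: K_def lazify_pmf)
      moreover have "q/2 * pmf \<pi> y \<le> 1/2" using q q1 pmf_le_1[of \<pi> y] pmf_nonneg[of \<pi> y]
        by (simp add: mult_le_one)
      ultimately show ?thesis by simp
    next
      case False
      have wE: "w E > 0" and wy: "w y > 0" using wpos E y by auto
      have m1: "min (pmf (Q E) y * w E) (pmf (Q y) E * w y) \<ge> q * min (w E) (w y)"
      proof (rule min.boundedI)
        have "q * min (w E) (w y) \<le> q * w E" using q by (intro mult_left_mono) auto
        also have "\<dots> \<le> pmf (Q E) y * w E" using qb[OF E y] wE by (intro mult_right_mono) auto
        finally show "q * min (w E) (w y) \<le> pmf (Q E) y * w E" .
        have "q * min (w E) (w y) \<le> q * w y" using q by (intro mult_left_mono) auto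
        also have "\<dots> \<le> pmf (Q y) E * w y" using qb[OF y E] wy by (intro mult_right_mono) auto
        finally show "q * min (w E) (w y) \<le> pmf (Q y) E * w y" .
      qed
      have m2: "min (w E) (w y) * Z \<ge> w E * w y"
        using wZ[OF E] wZ[OF y] wE wy by (auto simp: min_def mult_left_mono mult.commute)
      have m3: "q * min (w E) (w y) \<ge> w E * (q * w y / Z)"
      proof -
        have "w E * (q * w y / Z) = q * (w E * w y) / Z" by simp
        also have "\<dots> \<le> q * (min (w E) (w y) * Z) / Z"
          using m2 q Zpos by (intro divide_right_mono mult_left_mono) auto
        also have "\<dots> = q * min (w E) (w y)" using Zpos by simp
        finally show ?thesis .
      qed
      have "w E * (pmf (Q E) y * a E y) \<ge> w E * (q * w y / Z)" using kq[OF E y] m1 m3 by linarith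
      then have ineq: "pmf (Q E) y * a E y \<ge> q * w y / Z" by (rule mult_left_le_imp_le[OF _ wE])
      have e1: "q/2 * pmf \<pi> y = 1/2 * (q * w y / Z)" by (simp add: pi_pmf)
      have e2: "pmf (K E) y = 1/2 * (a E y * pmf (Q E) y)" using K_off[of y E] False by simp
      have e3: "a E y * pmf (Q E) y = pmf (Q E) y * a E y" by simp
      show ?thesis unfolding e1 e2 e3 using ineq by (intro mult_left_mono) auto
    qed
  qed
  have "tv_dist (kernel_pow K t x) \<pi> \<le> (1 - q/2) ^ t"
    by (rule doeblin[OF fin sp]) (use sk stat minor q q1 x in auto)
  then show ?thesis using goal by simp
qed

lemma data_lik_pos:
  assumes "s2 > 0" "lam > 0"
  shows "data_lik B d s2 lam n D E > 0"
proof -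
  let ?Psi = "design_mat n (\<lambda>i. fst (D i)) (ens_cells B d E)"
  have P: "?Psi \<in> carrier_mat n (length (ens_cells B d E))" by (simp add: design_mat_def)
  have "Determinant.det (s2 \<cdot>\<^sub>m (1\<^sub>m n + (1 / lam) \<cdot>\<^sub>m (?Psi * transpose_mat ?Psi))) \<noteq> 0"
    using det_Sig_nz[OF P assms(1)] assms(2) by simp
  then show ?thesis unfolding data_lik_def marg_lik_def Let_def by simp
qed

lemma bk_eq: "bart_kernel B d p0 pg pp pc ps r 1 prior s2 lam n D =
  (\<lambda>E. bind_pmf (ens_prop_pow B d p0 pg pp pc ps r E) (\<lambda>E'. map_pmf (\<lambda>acc. if acc then E' else E)
        (bernoulli_pmf (min ((pmf (ens_prop_pow B d p0 pg pp pc ps r E') E * pmf prior E') /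
           (pmf (ens_prop_pow B d p0 pg pp pc ps r E) E' * pmf prior E) *
           (data_lik B d s2 lam n D E' / data_lik B d s2 lam n D E) powr (1 / 1)) 1))))"
  by (rule ext) (simp only: bart_kernel_def Let_def)

lemma tp_eq: "tempered_post B d 1 prior s2 lam n D =
  embed_pmf (\<lambda>E. pmf prior E * data_lik B d s2 lam n D E powr (1 / 1) /
     (\<Sum>E'\<in>set_pmf prior. pmf prior E' * data_lik B d s2 lam n D E' powr (1 / 1)))"
  by (simp only: tempered_post_def)

theorem theorem7p2:
  fixes B d m r :: nat and \<nu> :: "nat list pmf" and noise :: "real measure"
    and fstar :: "nat list \<Rightarrow> real" and p0 pg pp pc ps s2 lam eps :: real
    and prior :: "tree list pmf"
  assumes "set_pmf \<nu> = Xset B d"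
    and "centered_subgaussian noise"
    and "additive B d fstar"
    and "pg > 0" and "pp > 0" and "p0 > 0" and "pc \<ge> 0" and "ps \<ge> 0"
    and "p0 + pg + pp + pc + ps = 1"
    and "m \<ge> 1"
    and "set_pmf prior = TSE_space B d m"
    and "s2 > 0" and "lam > 0"
    and "enat r \<ge> tse_diam B d p0 pg pp pc ps m"
    and "eps > 0"
  shows "\<forall>\<delta>::real. 0 < \<delta> \<and> \<delta> < 1 \<longrightarrow>
          (\<exists>(N::nat) (C::real). C > 0 \<and>
            (\<forall>n>N. {D \<in> space (data_measure n \<nu> noise fstar).
                     ennreal_of_enat (bart_mix_time B d p0 pg pp pc ps m r 1 prior s2 lam eps n D)
                       > ennreal C} \<in> sets (data_measure n \<nu> noise fstar)
                 \<and> measure (data_measure n \<nu> noise fstar)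
                     {D \<in> space (data_measure n \<nu> noise fstar).
                       ennreal_of_enat (bart_mix_time B d p0 pg pp pc ps m r 1 prior s2 lam eps n D)
                         > ennreal C} < \<delta>))"
proof -
  note probs = assms(6,4,5,7,8,9)
  let ?S = "TSE_space B d m"
  let ?Q = "ens_prop_pow B d p0 pg pp pc ps r"
  define q where "q = Min ((\<lambda>(E, E'). pmf (?Q E) E') ` (?S \<times> ?S))"
  have finS: "finite ?S" by (rule finite_TSE)
  have neS: "?S \<noteq> {}" using TSE_nonempty by blast
  have qb: "pmf (?Q E) E' \<ge> q" if "E \<in> ?S" "E' \<in> ?S" for E E'
    unfolding q_def using finS that by (intro Min_le) (auto intro!: image_eqI[of _ _ "(E, E')"])
  have qpos: "q > 0"
  proof -
    have "q \<in> (\<lambda>(E, E'). pmf (?Q E) E') ` (?S \<times> ?S)"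
      unfolding q_def using finS neS by (intro Min_in) auto
    then obtain E E' where EE: "E \<in> ?S" "E' \<in> ?S" "q = pmf (?Q E) E'" by auto
    have "E' \<in> set_pmf (?Q E)" using Qr_pos[OF probs assms(10,14) EE(1,2)] .
    then show ?thesis using EE(3) by (simp add: pmf_positive)
  qed
  have q1: "q \<le> 1" using qb[of "replicate m Leaf" "replicate m Leaf"] TSE_nonempty
    pmf_le_1[of "?Q (replicate m Leaf)" "replicate m Leaf"] by simp
  have "1 - q/2 < 1" using qpos by simp
  then obtain t0 where t0: "(1 - q/2) ^ t0 < eps" using real_arch_pow_inv[OF assms(15)] by blast
  have mix: "bart_mix_time B d p0 pg pp pc ps m r 1 prior s2 lam eps n D \<le> enat t0" for n D
  proof -
    have tv: "tv_dist (kernel_pow (lazify (bart_kernel B d p0 pg pp pc ps r 1 prior s2 lam n D)) t0 x)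
        (tempered_post B d 1 prior s2 lam n D) \<le> eps" if x: "x \<in> ?S" for x
    proof -
      have "tv_dist (kernel_pow (lazify (bart_kernel B d p0 pg pp pc ps r 1 prior s2 lam n D)) t0 x)
          (tempered_post B d 1 prior s2 lam n D) \<le> (1 - q/2) ^ t0"
        unfolding bk_eq tp_eq
        by (rule mh_mixing[OF finS assms(11) data_lik_pos[OF assms(12,13)] qpos qb x])
      then show ?thesis using t0 by simp
    qed
    show ?thesis unfolding bart_mix_time_def mix_time_def
      by (rule INF_lower2[of t0]) (use tv in auto)
  qed
  show ?thesis
  proof (intro allI impI)
    fix \<delta> :: real assume \<delta>: "0 < \<delta> \<and> \<delta> < 1"
    have empty: "{D \<in> space (data_measure n \<nu> noise fstar).
                     ennreal_of_enat (bart_mix_time B d p0 pg pp pc ps m r 1 prior s2 lam eps n D)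
                       > ennreal (real t0 + 1)} = {}" for n
    proof -
      have "ennreal_of_enat (bart_mix_time B d p0 pg pp pc ps m r 1 prior s2 lam eps n D) \<le> ennreal (real t0 + 1)" for D
      proof -
        have "ennreal_of_enat (bart_mix_time B d p0 pg pp pc ps m r 1 prior s2 lam eps n D) \<le> ennreal_of_enat (enat t0)"
          by (simp only: ennreal_of_enat_le_iff) (rule mix)
        also have "\<dots> = ennreal (real t0)" by (simp add: ennreal_of_nat_eq_real_of_nat)
        also have "\<dots> \<le> ennreal (real t0 + 1)" by simp
        finally show ?thesis .
      qed
      then show ?thesis by (auto simp: not_less[symmetric])
    qed
    show "\<exists>(N::nat) (C::real). C > 0 \<and>
            (\<forall>n>N. {D \<in> space (data_measure n \<nu> noise fstar).
                     ennreal_of_enat (bart_mix_time B d p0 pg pp pc ps m r 1 prior s2 lam eps n D)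
                       > ennreal C} \<in> sets (data_measure n \<nu> noise fstar)
                 \<and> measure (data_measure n \<nu> noise fstar)
                     {D \<in> space (data_measure n \<nu> noise fstar).
                       ennreal_of_enat (bart_mix_time B d p0 pg pp pc ps m r 1 prior s2 lam eps n D)
                         > ennreal C} < \<delta>)"
      apply (intro exI[of _ "0::nat"] exI[of _ "real t0 + 1"] conjI allI impI)
      apply (simp_all only: empty)
      using \<delta> by auto
  qed
qed

end
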